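(* Let $A=(a_{ij})_{1\le i,j\le n}$ be a real Nekrasov matrix with $a_{ii}>0$ for all $i$. Let $k$ be the smallest index such that $a_{kj}=0$ for all $j>k$, and let $\epsilon_1,\dots,\epsilon_n$ be real numbers with $\epsilon_i=0$ for $i<k$ and, for $i=k,\dots,n$, $0<\epsilon_i<a_{ii}-h_i(A)$ and $\epsilon_i>\sum_{j=k}^{i-1}\frac{|a_{ij}|\epsilon_j}{a_{jj}}$. Let $s_i:=\frac{h_i(A)+\epsilon_i}{a_{ii}}$, $w_i:=\sum_{j=1}^{i-1}|a_{ij}|\frac{\epsilon_j}{a_{jj}}$ and $p_i:=\sum_{j=i+1}^{n}|a_{ij}|\frac{a_{jj}-h_j(A)-\epsilon_j}{a_{jj}}$ for $i\in N$. Then $$\max_{d\in[0,1]^n}\|(I-D+DA)^{-1}\|_\infty\le \max\left\{\frac{1}{\min_{i}(\epsilon_i-w_i+p_i)},\ \frac{1}{\min_i s_i}\right\},$$ where for $d=(d_1,\dots,d_n)\in[0,1]^n$, $D=\mathrm{diag}(d_1,\dots,d_n)$ and $I$ is the $n\times n$ identity matrix.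
   Context: For a real $n\times n$ matrix $A=(a_{ij})$ with $a_{ii}\ne 0$ for all $i$, define recursively $h_1(A):=\sum_{j\ne 1}|a_{1j}|$ and $h_i(A):=\sum_{j=1}^{i-1}|a_{ij}|\frac{h_j(A)}{|a_{jj}|}+\sum_{j=i+1}^{n}|a_{ij}|$ for $i=2,\dots,n$. $A$ is a Nekrasov matrix if $|a_{ii}|>h_i(A)$ for all $i\in N=\{1,\dots,n\}$. $\|\cdot\|_\infty$ is the maximum absolute row sum norm. (The matrices $I-D+DA$ are nonsingular for all such $D$.) *)

theory Defs
  imports Complex_Main
begin

text \<open>n x n real matrices are represented as functions nat => nat => real,
  with indices ranging over 1..n (entries outside are irrelevant).\<close>

function nek_h :: "(nat \<Rightarrow> nat \<Rightarrow> real) \<Rightarrow> nat \<Rightarrow> nat \<Rightarrow> real" where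
  "nek_h A n i =
     (\<Sum>j\<in>{1..<i}. \<bar>A i j\<bar> * nek_h A n j / \<bar>A j j\<bar>) + (\<Sum>j\<in>{i<..n}. \<bar>A i j\<bar>)"
  by auto
termination
  by (relation "measure (\<lambda>(A, n, i). i)") auto

text \<open>Note: for i = 1 the first sum is empty, so nek_h A n 1 = sum over j in 2..n of |a_1j|,
  matching the paper's h_1.\<close>

definition nekrasov :: "nat \<Rightarrow> (nat \<Rightarrow> nat \<Rightarrow> real) \<Rightarrow> bool" where
  "nekrasov n A \<longleftrightarrow> (\<forall>i\<in>{1..n}. A i i \<noteq> 0 \<and> \<bar>A i i\<bar> > nek_h A n i)"

definition inf_norm :: "nat \<Rightarrow> (nat \<Rightarrow> nat \<Rightarrow> real) \<Rightarrow> real" where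
  "inf_norm n X = Max ((\<lambda>i. \<Sum>j\<in>{1..n}. \<bar>X i j\<bar>) ` {1..n})"

definition mat_mult :: "nat \<Rightarrow> (nat \<Rightarrow> nat \<Rightarrow> real) \<Rightarrow> (nat \<Rightarrow> nat \<Rightarrow> real) \<Rightarrow> (nat \<Rightarrow> nat \<Rightarrow> real)" where
  "mat_mult n X Y = (\<lambda>i j. \<Sum>l\<in>{1..n}. X i l * Y l j)"

definition id_mat :: "nat \<Rightarrow> nat \<Rightarrow> real" where
  "id_mat = (\<lambda>i j. if i = j then 1 else 0)"

definition IDDA :: "(nat \<Rightarrow> real) \<Rightarrow> (nat \<Rightarrow> nat \<Rightarrow> real) \<Rightarrow> (nat \<Rightarrow> nat \<Rightarrow> real)" where
  "IDDA d A = (\<lambda>i j. id_mat i j - d i * id_mat i j + d i * A i j)"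

definition is_inverse :: "nat \<Rightarrow> (nat \<Rightarrow> nat \<Rightarrow> real) \<Rightarrow> (nat \<Rightarrow> nat \<Rightarrow> real) \<Rightarrow> bool" where
  "is_inverse n M X \<longleftrightarrow>
     (\<forall>i\<in>{1..n}. \<forall>j\<in>{1..n}. mat_mult n M X i j = id_mat i j \<and> mat_mult n X M i j = id_mat i j)"

end

theory Submission
  imports Defs
begin

declare nek_h.simps[simp del]

lemma inv_min: "(a::real) > 0 \<Longrightarrow> b > 0 \<Longrightarrow> 1 / min a b = max (1/a) (1/b)"
  by (cases "a \<le> b") (auto simp: min_def max_def divide_le_eq le_divide_eq field_simps)

lemma nek_h_nonneg: "nek_h A n i \<ge> 0"
proof (induction i rule: less_induct)
  case (less i)
  have "(\<Sum>j\<in>{1..<i}. \<bar>A i j\<bar> * nek_h A n j / \<bar>A j j\<bar>) \<ge> 0"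
    using less by (intro sum_nonneg) (auto intro!: divide_nonneg_nonneg mult_nonneg_nonneg)
  moreover have "(\<Sum>j\<in>{i<..n}. \<bar>A i j\<bar>) \<ge> 0" by (intro sum_nonneg) auto
  ultimately show ?case by (subst nek_h.simps) linarith
qed

lemma key:
  fixes A :: "nat \<Rightarrow> nat \<Rightarrow> real" and d y s :: "nat \<Rightarrow> real" and b m :: real
  assumes i: "i \<in> {1..n}" and d: "0 \<le> d i" "d i \<le> 1"
    and spos: "\<forall>j\<in>{1..n}. 0 < s j" and aii: "A i i > 0"
    and mb: "m \<le> b" and ms: "m \<le> s i"
    and bdef: "A i i * s i - (\<Sum>j\<in>{1..n}-{i}. \<bar>A i j\<bar> * s j) = b"
    and zmax: "\<forall>j\<in>{1..n}. \<bar>y j / s j\<bar> \<le> \<bar>y i / s i\<bar>"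
  shows "m * \<bar>y i / s i\<bar> \<le> \<bar>\<Sum>j\<in>{1..n}. IDDA d A i j * y j\<bar>"
proof -
  define Z where "Z = \<bar>y i / s i\<bar>"
  have Z0: "Z \<ge> 0" by (simp add: Z_def)
  have si: "s i > 0" using spos i by auto
  have S: "(\<Sum>j\<in>{1..n}. IDDA d A i j * y j) = (1 - d i + d i * A i i) * y i + d i * (\<Sum>j\<in>{1..n}-{i}. A i j * y j)"
  proof -
    have "(\<Sum>j\<in>{1..n}. IDDA d A i j * y j) = (\<Sum>j\<in>{1..n}. (id_mat i j - d i * id_mat i j) * y j) + d i * (\<Sum>j\<in>{1..n}. A i j * y j)"
      unfolding sum_distrib_left sum.distrib[symmetric] by (rule sum.cong) (auto simp: IDDA_def algebra_simps)
    also have "(\<Sum>j\<in>{1..n}. (id_mat i j - d i * id_mat i j) * y j) = (\<Sum>j\<in>{1..n}. (if i = j then (1 - d i) * y i else 0))"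
      by (rule sum.cong) (auto simp: id_mat_def)
    also have "\<dots> = (1 - d i) * y i" using i by (simp add: sum.delta)
    also have "(\<Sum>j\<in>{1..n}. A i j * y j) = A i i * y i + (\<Sum>j\<in>{1..n}-{i}. A i j * y j)"
      using i by (simp add: sum.remove)
    finally show ?thesis by (simp add: algebra_simps)
  qed
  define T where "T = (\<Sum>j\<in>{1..n}-{i}. \<bar>A i j\<bar> * s j)"
  have off: "\<bar>\<Sum>j\<in>{1..n}-{i}. A i j * y j\<bar> \<le> Z * T"
  proof -
    have "\<bar>\<Sum>j\<in>{1..n}-{i}. A i j * y j\<bar> \<le> (\<Sum>j\<in>{1..n}-{i}. \<bar>A i j * y j\<bar>)" by (rule sum_abs)
    also have "\<dots> \<le> (\<Sum>j\<in>{1..n}-{i}. \<bar>A i j\<bar> * s j * Z)"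
    proof (rule sum_mono)
      fix j assume j: "j \<in> {1..n}-{i}"
      have sj: "s j > 0" using spos j by auto
      have "\<bar>y j\<bar> = s j * \<bar>y j / s j\<bar>" using sj by (simp add: abs_divide)
      also have "\<dots> \<le> s j * Z" using zmax j sj unfolding Z_def by (intro mult_left_mono) (auto simp del: abs_divide)
      finally have "\<bar>y j\<bar> \<le> s j * Z" .
      then show "\<bar>A i j * y j\<bar> \<le> \<bar>A i j\<bar> * s j * Z"
        by (simp add: abs_mult mult.assoc mult_left_mono)
    qed
    also have "\<dots> = Z * T" unfolding T_def sum_distrib_left by (rule sum.cong) (auto simp: algebra_simps)
    finally show ?thesis .
  qed
  have c0: "1 - d i + d i * A i i \<ge> 0" using d aii by (simp add: add_nonneg_nonneg)
  have diag: "\<bar>(1 - d i + d i * A i i) * y i\<bar> = (1 - d i + d i * A i i) * s i * Z"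
    using c0 si unfolding Z_def by (simp add: abs_mult abs_divide)
  have "\<bar>d i * (\<Sum>j\<in>{1..n}-{i}. A i j * y j)\<bar> \<le> d i * (Z * T)"
    using off d by (simp add: abs_mult mult_left_mono)
  then have "(1 - d i + d i * A i i) * s i * Z - d i * (Z * T) \<le> \<bar>\<Sum>j\<in>{1..n}. IDDA d A i j * y j\<bar>"
    unfolding S using diag by linarith
  moreover have "(1 - d i + d i * A i i) * s i * Z - d i * (Z * T) = Z * ((1 - d i) * s i + d i * b)"
    using bdef unfolding T_def[symmetric] by (simp add: algebra_simps)
  moreover have "m \<le> (1 - d i) * s i + d i * b"
  proof -
    have "(1 - d i) * m \<le> (1 - d i) * s i" using d ms by (intro mult_left_mono) auto
    moreover have "d i * m \<le> d i * b" using d mb by (intro mult_left_mono) auto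
    ultimately show ?thesis by (simp add: algebra_simps)
  qed
  then have "Z * m \<le> Z * ((1 - d i) * s i + d i * b)" using Z0 by (intro mult_left_mono)
  ultimately show ?thesis unfolding Z_def by (simp add: mult.commute)
qed

theorem theorem5p2:
  fixes n k :: nat and A :: "nat \<Rightarrow> nat \<Rightarrow> real" and \<epsilon> :: "nat \<Rightarrow> real"
  assumes "n \<ge> 1"
    and "nekrasov n A"
    and "\<forall>i\<in>{1..n}. A i i > 0"
    and "1 \<le> k" and "k \<le> n"
    and "\<forall>j\<in>{k<..n}. A k j = 0"
    and "\<forall>k'\<in>{1..<k}. \<exists>j\<in>{k'<..n}. A k' j \<noteq> 0"
    and "\<forall>i\<in>{1..<k}. \<epsilon> i = 0"
    and "\<forall>i\<in>{k..n}. 0 < \<epsilon> i \<and> \<epsilon> i < A i i - nek_h A n i"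
    and "\<forall>i\<in>{k..n}. \<epsilon> i > (\<Sum>j\<in>{k..<i}. \<bar>A i j\<bar> * \<epsilon> j / A j j)"
  shows
    "\<forall>d. (\<forall>i\<in>{1..n}. 0 \<le> d i \<and> d i \<le> 1) \<longrightarrow>
       (\<forall>X. is_inverse n (IDDA d A) X \<longrightarrow>
          inf_norm n X \<le>
            max (1 / Min ((\<lambda>i. \<epsilon> i - (\<Sum>j\<in>{1..<i}. \<bar>A i j\<bar> * \<epsilon> j / A j j)
                              + (\<Sum>j\<in>{i<..n}. \<bar>A i j\<bar> * (A j j - nek_h A n j - \<epsilon> j) / A j j)) ` {1..n}))
                (1 / Min ((\<lambda>i. (nek_h A n i + \<epsilon> i) / A i i) ` {1..n})))"
proof (intro allI impI)
  fix d X
  assume d: "\<forall>i\<in>{1..n}. 0 \<le> d i \<and> d i \<le> 1" and inv: "is_inverse n (IDDA d A) X"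
  note nek = assms(2)[unfolded nekrasov_def]
  define s where "s = (\<lambda>i. (nek_h A n i + \<epsilon> i) / A i i)"
  define \<beta> where "\<beta> = (\<lambda>i. \<epsilon> i - (\<Sum>j\<in>{1..<i}. \<bar>A i j\<bar> * \<epsilon> j / A j j)
                              + (\<Sum>j\<in>{i<..n}. \<bar>A i j\<bar> * (A j j - nek_h A n j - \<epsilon> j) / A j j))"
  have Aii: "\<forall>i\<in>{1..n}. A i i > 0" using assms(3) .
  have gap: "\<forall>j\<in>{1..n}. A j j - nek_h A n j - \<epsilon> j > 0"
  proof
    fix j assume j: "j \<in> {1..n}"
    show "A j j - nek_h A n j - \<epsilon> j > 0"
    proof (cases "j < k")
      case True
      then have "\<epsilon> j = 0" using assms(8) j by auto
      moreover have "\<bar>A j j\<bar> > nek_h A n j" using nek j by auto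
      moreover have "A j j > 0" using Aii j by blast
      ultimately show ?thesis by simp
    next
      case False
      then have "j \<in> {k..n}" using j by auto
      then show ?thesis using assms(9) by force
    qed
  qed
  have epsnn: "\<forall>j\<in>{1..n}. \<epsilon> j \<ge> 0"
  proof
    fix j assume j: "j \<in> {1..n}"
    show "\<epsilon> j \<ge> 0"
    proof (cases "j < k")
      case True
      then show ?thesis using assms(8) j by auto
    next
      case False
      then have "j \<in> {k..n}" using j by auto
      then have "0 < \<epsilon> j" using assms(9) by blast
      then show ?thesis by simp
    qed
  qed
  have spos: "\<forall>i\<in>{1..n}. 0 < s i"
  proof
    fix i assume i: "i \<in> {1..n}"
    have hnn: "nek_h A n i \<ge> 0" by (rule nek_h_nonneg)
    have "nek_h A n i + \<epsilon> i > 0"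
    proof (cases "i < k")
      case True
      then have e0: "\<epsilon> i = 0" using assms(8) i by auto
      obtain j where j: "j \<in> {i<..n}" "A i j \<noteq> 0" using assms(7) True i by force
      have p1: "(\<Sum>j\<in>{1..<i}. \<bar>A i j\<bar> * nek_h A n j / \<bar>A j j\<bar>) \<ge> 0"
        by (intro sum_nonneg) (auto intro!: divide_nonneg_nonneg mult_nonneg_nonneg nek_h_nonneg)
      have p2: "(\<Sum>j\<in>{i<..n}. \<bar>A i j\<bar>) > 0"
        using j by (intro sum_pos2[of _ j]) auto
      have "nek_h A n i > 0" using p1 p2 by (subst nek_h.simps) linarith
      then show ?thesis using e0 by simp
    next
      case False
      then have "i \<in> {k..n}" using i by auto
      then have "0 < \<epsilon> i" using assms(9) by blast
      then show ?thesis using hnn by simp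
    qed
    then show "0 < s i" unfolding s_def using Aii i by auto
  qed
  have sle: "\<forall>i\<in>{1..n}. s i \<le> 1"
  proof
    fix i assume i: "i \<in> {1..n}"
    have "nek_h A n i + \<epsilon> i \<le> A i i" using gap i by force
    then show "s i \<le> 1" unfolding s_def using Aii i by auto
  qed
  have bpos: "\<forall>i\<in>{1..n}. 0 < \<beta> i"
  proof
    fix i assume i: "i \<in> {1..n}"
    have pnn: "(\<Sum>j\<in>{i<..n}. \<bar>A i j\<bar> * (A j j - nek_h A n j - \<epsilon> j) / A j j) \<ge> 0"
    proof (rule sum_nonneg)
      fix x assume "x \<in> {i<..n}"
      then have "x \<in> {1..n}" using i by auto
      then show "0 \<le> \<bar>A i x\<bar> * (A x x - nek_h A n x - \<epsilon> x) / A x x"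
        using gap Aii by (intro divide_nonneg_nonneg mult_nonneg_nonneg) (auto simp: less_imp_le)
    qed
    show "0 < \<beta> i"
    proof (cases "i < k")
      case True
      then have e0: "\<epsilon> i = 0" using assms(8) i by auto
      have w0: "(\<Sum>j\<in>{1..<i}. \<bar>A i j\<bar> * \<epsilon> j / A j j) = 0"
        using assms(8) True by (intro sum.neutral) auto
      obtain j where j: "j \<in> {i<..n}" "A i j \<noteq> 0" using assms(7) True i by force
      have "(\<Sum>j\<in>{i<..n}. \<bar>A i j\<bar> * (A j j - nek_h A n j - \<epsilon> j) / A j j) > 0"
      proof (rule sum_pos2[of _ j])
        have "j \<in> {1..n}" using j i by auto
        then show "0 < \<bar>A i j\<bar> * (A j j - nek_h A n j - \<epsilon> j) / A j j"
          using gap Aii j by (intro divide_pos_pos mult_pos_pos) auto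
      next
        fix x assume "x \<in> {i<..n}"
        then have "x \<in> {1..n}" using i by auto
        then show "0 \<le> \<bar>A i x\<bar> * (A x x - nek_h A n x - \<epsilon> x) / A x x"
          using gap Aii by (intro divide_nonneg_nonneg mult_nonneg_nonneg) (auto simp: less_imp_le)
      qed (use j in auto)
      then show ?thesis unfolding \<beta>_def using e0 w0 by simp
    next
      case False
      have "(\<Sum>j\<in>{1..<i}. \<bar>A i j\<bar> * \<epsilon> j / A j j) = (\<Sum>j\<in>{1..<k}. \<bar>A i j\<bar> * \<epsilon> j / A j j) + (\<Sum>j\<in>{k..<i}. \<bar>A i j\<bar> * \<epsilon> j / A j j)"
        using False assms(4) by (simp add: sum.atLeastLessThan_concat)
      also have "(\<Sum>j\<in>{1..<k}. \<bar>A i j\<bar> * \<epsilon> j / A j j) = 0"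
        using assms(8) by (intro sum.neutral) auto
      finally have "(\<Sum>j\<in>{1..<i}. \<bar>A i j\<bar> * \<epsilon> j / A j j) < \<epsilon> i"
        using assms(10) False i by force
      then show ?thesis unfolding \<beta>_def using pnn by simp
    qed
  qed
  have bdef: "\<forall>i\<in>{1..n}. A i i * s i - (\<Sum>j\<in>{1..n}-{i}. \<bar>A i j\<bar> * s j) = \<beta> i"
  proof
    fix i assume i: "i \<in> {1..n}"
    have split: "{1..n}-{i} = {1..<i} \<union> {i<..n}" using i by auto
    have sum_split: "(\<Sum>j\<in>{1..n}-{i}. \<bar>A i j\<bar> * s j) = (\<Sum>j\<in>{1..<i}. \<bar>A i j\<bar> * s j) + (\<Sum>j\<in>{i<..n}. \<bar>A i j\<bar> * s j)"
      unfolding split by (rule sum.union_disjoint) auto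
    have h: "nek_h A n i = (\<Sum>j\<in>{1..<i}. \<bar>A i j\<bar> * nek_h A n j / A j j) + (\<Sum>j\<in>{i<..n}. \<bar>A i j\<bar>)"
    proof -
      have "(\<Sum>j\<in>{1..<i}. \<bar>A i j\<bar> * nek_h A n j / \<bar>A j j\<bar>) = (\<Sum>j\<in>{1..<i}. \<bar>A i j\<bar> * nek_h A n j / A j j)"
      proof (rule sum.cong)
        fix x assume "x \<in> {1..<i}"
        then have "x \<in> {1..n}" using i by auto
        then have "A x x > 0" using Aii by blast
        then show "\<bar>A i x\<bar> * nek_h A n x / \<bar>A x x\<bar> = \<bar>A i x\<bar> * nek_h A n x / A x x" by simp
      qed simp
      then show ?thesis by (subst nek_h.simps) simp
    qed
    have l: "(\<Sum>j\<in>{1..<i}. \<bar>A i j\<bar> * s j) = (\<Sum>j\<in>{1..<i}. \<bar>A i j\<bar> * nek_h A n j / A j j) + (\<Sum>j\<in>{1..<i}. \<bar>A i j\<bar> * \<epsilon> j / A j j)"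
      unfolding sum.distrib[symmetric] s_def by (rule sum.cong) (auto simp: add_divide_distrib algebra_simps)
    have r: "(\<Sum>j\<in>{i<..n}. \<bar>A i j\<bar>) - (\<Sum>j\<in>{i<..n}. \<bar>A i j\<bar> * s j) = (\<Sum>j\<in>{i<..n}. \<bar>A i j\<bar> * (A j j - nek_h A n j - \<epsilon> j) / A j j)"
      unfolding sum_subtractf[symmetric] s_def
    proof (rule sum.cong)
      fix j assume j: "j \<in> {i<..n}"
      then have "A j j > 0" using Aii i by auto
      then show "\<bar>A i j\<bar> - \<bar>A i j\<bar> * ((nek_h A n j + \<epsilon> j) / A j j) = \<bar>A i j\<bar> * (A j j - nek_h A n j - \<epsilon> j) / A j j"
        by (simp add: field_simps)
    qed simp
    have "A i i > 0" using Aii i by blast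
    then have "A i i * s i = nek_h A n i + \<epsilon> i" unfolding s_def by simp
    then show "A i i * s i - (\<Sum>j\<in>{1..n}-{i}. \<bar>A i j\<bar> * s j) = \<beta> i"
      unfolding \<beta>_def sum_split using h l r by linarith
  qed
  define m where "m = min (Min (\<beta> ` {1..n})) (Min (s ` {1..n}))"
  have ne: "{1..n} \<noteq> {}" using assms(1) by auto
  have mpos: "m > 0" unfolding m_def using bpos spos ne by auto
  have mb: "\<forall>i\<in>{1..n}. m \<le> \<beta> i" unfolding m_def
    by (metis Min_le finite_atLeastAtMost finite_imageI image_eqI min.coboundedI1)
  have ms: "\<forall>i\<in>{1..n}. m \<le> s i" unfolding m_def
    by (metis Min_le finite_atLeastAtMost finite_imageI image_eqI min.coboundedI2)
  have rowb: "(\<Sum>j\<in>{1..n}. \<bar>X i0 j\<bar>) \<le> 1 / m" if i0: "i0 \<in> {1..n}" for i0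
  proof -
    define sg where "sg = (\<lambda>j. sgn (X i0 j))"
    define y where "y = (\<lambda>l. \<Sum>j\<in>{1..n}. X l j * sg j)"
    have My: "(\<Sum>j\<in>{1..n}. IDDA d A l j * y j) = sg l" if l: "l \<in> {1..n}" for l
    proof -
      have "(\<Sum>j\<in>{1..n}. IDDA d A l j * y j) = (\<Sum>j'\<in>{1..n}. \<Sum>j\<in>{1..n}. IDDA d A l j' * X j' j * sg j)"
        unfolding y_def sum_distrib_left by (simp add: mult.assoc)
      also have "\<dots> = (\<Sum>j\<in>{1..n}. \<Sum>j'\<in>{1..n}. IDDA d A l j' * X j' j * sg j)" by (rule sum.swap)
      also have "\<dots> = (\<Sum>j\<in>{1..n}. mat_mult n (IDDA d A) X l j * sg j)"
        unfolding mat_mult_def sum_distrib_right ..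
      also have "\<dots> = (\<Sum>j\<in>{1..n}. id_mat l j * sg j)"
        using inv l unfolding is_inverse_def by (intro sum.cong) auto
      also have "\<dots> = (\<Sum>j\<in>{1..n}. if l = j then sg l else 0)"
        by (rule sum.cong) (auto simp: id_mat_def)
      also have "\<dots> = sg l" using l by simp
      finally show ?thesis .
    qed
    obtain p where p: "p \<in> {1..n}" "\<forall>l\<in>{1..n}. \<bar>y l / s l\<bar> \<le> \<bar>y p / s p\<bar>"
    proof -
      have "Max ((\<lambda>l. \<bar>y l / s l\<bar>) ` {1..n}) \<in> (\<lambda>l. \<bar>y l / s l\<bar>) ` {1..n}"
        using ne by (intro Max_in) auto
      then obtain p where "p \<in> {1..n}" "\<bar>y p / s p\<bar> = Max ((\<lambda>l. \<bar>y l / s l\<bar>) ` {1..n})" by auto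
      then show ?thesis using that by auto
    qed
    have "m * \<bar>y p / s p\<bar> \<le> \<bar>\<Sum>j\<in>{1..n}. IDDA d A p j * y j\<bar>"
      using p d spos Aii mb ms bdef by (intro key[where b = "\<beta> p"]) auto
    also have "\<dots> \<le> 1" using My[OF p(1)] unfolding sg_def by (simp add: sgn_if)
    finally have yp: "\<bar>y p / s p\<bar> \<le> 1 / m" using mpos by (simp add: field_simps mult.commute)
    have "(\<Sum>j\<in>{1..n}. \<bar>X i0 j\<bar>) = y i0" unfolding y_def sg_def
      by (rule sum.cong) (auto simp: sgn_if)
    also have "\<dots> \<le> \<bar>y i0\<bar>" by simp
    also have "\<dots> = s i0 * \<bar>y i0 / s i0\<bar>"
    proof -
      have "s i0 > 0" using spos i0 by blast
      then show ?thesis by (simp add: abs_divide)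
    qed
    also have "\<dots> \<le> 1 * \<bar>y i0 / s i0\<bar>" using sle i0 by (intro mult_right_mono) auto
    also have "\<dots> \<le> \<bar>y p / s p\<bar>" using p i0 by simp
    finally show ?thesis using yp by linarith
  qed
  have "inf_norm n X \<le> 1 / m"
    unfolding inf_norm_def using ne rowb by (subst Max_le_iff) auto
  also have "1 / m = max (1 / Min (\<beta> ` {1..n})) (1 / Min (s ` {1..n}))"
  proof -
    have "Min (\<beta> ` {1..n}) > 0" "Min (s ` {1..n}) > 0" using bpos spos ne by auto
    then show ?thesis unfolding m_def by (rule inv_min)
  qed
  finally show "inf_norm n X \<le> max (1 / Min ((\<lambda>i. \<epsilon> i - (\<Sum>j\<in>{1..<i}. \<bar>A i j\<bar> * \<epsilon> j / A j j)
                              + (\<Sum>j\<in>{i<..n}. \<bar>A i j\<bar> * (A j j - nek_h A n j - \<epsilon> j) / A j j)) ` {1..n}))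
                (1 / Min ((\<lambda>i. (nek_h A n i + \<epsilon> i) / A i i) ` {1..n}))"
    unfolding \<beta>_def s_def .
qed

end
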